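(* Let $\mathcal{A}$ be a finite alphabet, $\mathbf{p}=(p_0,p_1)$ an irreducible pair on $\mathcal{A}$, and $\mathbf{q}=(p_1,p_0)$. Then $\mathcal{S}(\mathbf{q})=\mathcal{S}(\mathbf{p})^{-1}$.
   Context: Let $n=\#\mathcal{A}$. A pair is $\mathbf{p}=(p_0,p_1)$ with $p_0,p_1:\mathcal{A}\to\{1,\dots,n\}$ bijections; it is irreducible if $p_0^{-1}\{1,\dots,k\}\ne p_1^{-1}\{1,\dots,k\}$ for $1\le k<n$ (so $(p_1,p_0)$ is irreducible whenever $(p_0,p_1)$ is). For irreducible $\mathbf{p}$, $\mathcal{S}(\mathbf{p}):\mathcal{A}\to\mathcal{A}$ is defined by $\mathcal{S}(\mathbf{p})(\alpha)=p_0^{-1}(1)$ if $p_1(\alpha)=1$; $=p_0^{-1}(p_0(p_1^{-1}(n))+1)$ if $p_1(\alpha)=p_1(p_0^{-1}(n))+1$; $=p_0^{-1}(p_0(p_1^{-1}(p_1(\alpha)-1))+1)$ otherwise. It is a permutation of $\mathcal{A}$. *)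

theory Defs
  imports Main
begin

definition is_pair :: "'a set \<Rightarrow> ('a \<Rightarrow> nat) \<Rightarrow> ('a \<Rightarrow> nat) \<Rightarrow> bool" where
  "is_pair A p0 p1 \<longleftrightarrow> bij_betw p0 A {1..card A} \<and> bij_betw p1 A {1..card A}"

definition irreducible_pair :: "'a set \<Rightarrow> ('a \<Rightarrow> nat) \<Rightarrow> ('a \<Rightarrow> nat) \<Rightarrow> bool" where
  "irreducible_pair A p0 p1 \<longleftrightarrow> is_pair A p0 p1 \<and>
     (\<forall>k. 1 \<le> k \<and> k < card A \<longrightarrow>
        {a \<in> A. p0 a \<in> {1..k}} \<noteq> {a \<in> A. p1 a \<in> {1..k}})"

definition S_map :: "'a set \<Rightarrow> ('a \<Rightarrow> nat) \<Rightarrow> ('a \<Rightarrow> nat) \<Rightarrow> 'a \<Rightarrow> 'a" where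
  "S_map A p0 p1 \<alpha> =
     (let n = card A; i0 = the_inv_into A p0; i1 = the_inv_into A p1 in
      if p1 \<alpha> = 1 then i0 1
      else if p1 \<alpha> = p1 (i0 n) + 1 then i0 (p0 (i1 n) + 1)
      else i0 (p0 (i1 (p1 \<alpha> - 1)) + 1))"

end

theory Submission
  imports Defs
begin

lemma inv_facts:
  assumes "bij_betw p A {1..card A}"
  shows "\<And>k. k \<in> {1..card A} \<Longrightarrow> the_inv_into A p k \<in> A \<and> p (the_inv_into A p k) = k"
    and "\<And>a. a \<in> A \<Longrightarrow> the_inv_into A p (p a) = a \<and> p a \<in> {1..card A}"
  using assms
  by (auto simp: bij_betw_def the_inv_into_into f_the_inv_into_f the_inv_into_f_f)

lemma S_left_inv:
  assumes fin: "finite A" and pr: "is_pair A p0 p1" and a: "\<alpha> \<in> A"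
  shows "S_map A p0 p1 \<alpha> \<in> A \<and> S_map A p1 p0 (S_map A p0 p1 \<alpha>) = \<alpha>"
proof -
  define n where "n = card A"
  define i0 where "i0 = the_inv_into A p0"
  define i1 where "i1 = the_inv_into A p1"
  have b0: "bij_betw p0 A {1..n}" and b1: "bij_betw p1 A {1..n}"
    using pr by (auto simp: is_pair_def n_def)
  have I0: "\<And>k. k \<in> {1..n} \<Longrightarrow> i0 k \<in> A \<and> p0 (i0 k) = k"
   and I0': "\<And>a. a \<in> A \<Longrightarrow> i0 (p0 a) = a \<and> p0 a \<in> {1..n}"
    using inv_facts[OF b0[unfolded n_def]] by (auto simp: i0_def n_def)
  have I1: "\<And>k. k \<in> {1..n} \<Longrightarrow> i1 k \<in> A \<and> p1 (i1 k) = k"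
   and I1': "\<And>a. a \<in> A \<Longrightarrow> i1 (p1 a) = a \<and> p1 a \<in> {1..n}"
    using inv_facts[OF b1[unfolded n_def]] by (auto simp: i1_def n_def)
  have "card A > 0" using a fin card_gt_0_iff by blast
  then have n1: "n \<ge> 1" unfolding n_def by simp
  have Sp: "S_map A p0 p1 x = (if p1 x = 1 then i0 1
      else if p1 x = p1 (i0 n) + 1 then i0 (p0 (i1 n) + 1)
      else i0 (p0 (i1 (p1 x - 1)) + 1))" for x
    by (simp add: S_map_def Let_def n_def i0_def i1_def)
  have Sq: "S_map A p1 p0 x = (if p0 x = 1 then i1 1
      else if p0 x = p0 (i1 n) + 1 then i1 (p1 (i0 n) + 1)
      else i1 (p1 (i0 (p0 x - 1)) + 1))" for x
    by (simp add: S_map_def Let_def n_def i0_def i1_def)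
  define j where "j = p1 \<alpha>"
  have j: "j \<in> {1..n}" using I1' a j_def by blast
  have ia: "i1 j = \<alpha>" using I1' a j_def by blast
  have nA0: "i0 n \<in> A" "p0 (i0 n) = n" using I0 n1 by auto
  have nA1: "i1 n \<in> A" "p1 (i1 n) = n" using I1 n1 by auto
  show ?thesis
  proof (cases "j = 1")
    case True
    have "S_map A p0 p1 \<alpha> = i0 1" using Sp True j_def by simp
    moreover have "i0 1 \<in> A" "p0 (i0 1) = 1" using I0 n1 by auto
    ultimately show ?thesis using Sq ia True by simp
  next
    case F1: False
    show ?thesis
    proof (cases "j = p1 (i0 n) + 1")
      case True
      have ne: "i1 n \<noteq> i0 n"
      proof
        assume "i1 n = i0 n"
        then have "p1 (i0 n) = n" using nA1 by simp
        then show False using True j by simp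
      qed
      define m where "m = p0 (i1 n)"
      have m: "m \<in> {1..n}" using I0' nA1 m_def by blast
      have "m \<noteq> n"
      proof
        assume "m = n"
        then have "i0 m = i0 n" by simp
        then show False using I0' nA1 m_def ne by metis
      qed
      then have m1: "m + 1 \<in> {1..n}" using m by auto
      have S: "S_map A p0 p1 \<alpha> = i0 (m + 1)" using Sp F1 True j_def m_def by simp
      have g: "i0 (m+1) \<in> A" "p0 (i0 (m+1)) = m + 1" using I0 m1 by auto
      show ?thesis using S g Sq m m_def True ia by simp
    next
      case F2: False
      define \<beta> where "\<beta> = i1 (j - 1)"
      have jm: "j - 1 \<in> {1..n}" using j F1 by auto
      have b: "\<beta> \<in> A" "p1 \<beta> = j - 1" using I1 jm \<beta>_def by auto
      have "\<beta> \<noteq> i0 n" using b F2 F1 j by auto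
      then have "p0 \<beta> \<noteq> n" using I0' b(1) by metis
      moreover have pb0: "p0 \<beta> \<in> {1..n}" using I0' b(1) by blast
      ultimately have pb: "p0 \<beta> + 1 \<in> {1..n}" by auto
      have S: "S_map A p0 p1 \<alpha> = i0 (p0 \<beta> + 1)" using Sp F1 F2 j_def \<beta>_def by simp
      have g: "i0 (p0 \<beta> + 1) \<in> A" "p0 (i0 (p0 \<beta> + 1)) = p0 \<beta> + 1" using I0 pb by auto
      have "\<beta> \<noteq> i1 n" using b j nA1 by auto
      then have "p0 \<beta> \<noteq> p0 (i1 n)" using I0' b(1) nA1(1) by metis
      then have "S_map A p1 p0 (i0 (p0 \<beta> + 1)) = i1 (p1 (i0 (p0 \<beta>)) + 1)"
        using Sq g pb0 by simp
      also have "\<dots> = i1 j" using I0' b F1 j by simp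
      finally show ?thesis using S g ia by simp
    qed
  qed
qed

theorem lemma2p9:
  fixes A :: "'a set" and p0 p1 :: "'a \<Rightarrow> nat"
  assumes "finite A"
    and "irreducible_pair A p0 p1"
  shows "bij_betw (S_map A p0 p1) A A \<and>
         (\<forall>\<alpha>\<in>A. S_map A p1 p0 \<alpha> = the_inv_into A (S_map A p0 p1) \<alpha>)"
proof -
  have p: "is_pair A p0 p1" using assms(2) by (simp add: irreducible_pair_def)
  then have q: "is_pair A p1 p0" by (simp add: is_pair_def)
  note L1 = S_left_inv[OF assms(1) p] and L2 = S_left_inv[OF assms(1) q]
  have inj: "inj_on (S_map A p0 p1) A" by (metis L1 inj_onI)
  have img: "S_map A p0 p1 ` A = A"
  proof
    show "S_map A p0 p1 ` A \<subseteq> A" using L1 by auto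
    show "A \<subseteq> S_map A p0 p1 ` A"
    proof
      fix x assume "x \<in> A"
      then show "x \<in> S_map A p0 p1 ` A" using L2[of x] by (metis image_eqI)
    qed
  qed
  have bij: "bij_betw (S_map A p0 p1) A A" using inj img by (simp add: bij_betw_def)
  moreover have "\<forall>\<alpha>\<in>A. S_map A p1 p0 \<alpha> = the_inv_into A (S_map A p0 p1) \<alpha>"
  proof
    fix x assume x: "x \<in> A"
    have e: "S_map A p0 p1 (S_map A p1 p0 x) = x" "S_map A p1 p0 x \<in> A" using L2 x by auto
    have "the_inv_into A (S_map A p0 p1) (S_map A p0 p1 (S_map A p1 p0 x)) = S_map A p1 p0 x"
      using e(2) inj by (simp add: the_inv_into_f_f)
    then show "S_map A p1 p0 x = the_inv_into A (S_map A p0 p1) x" unfolding e(1) by simp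
  qed
  ultimately show ?thesis by blast
qed

end
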